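(* Let $F$ be a field of characteristic $2$ with subfield of squares $F^2$. The map $F\times F\to W_{ssq}(F)$, $(\alpha,\alpha')\mapsto$ Witt class of $\langle\alpha\,|\,\alpha'\rangle$, induces a well-defined group homomorphism $$\Phi\colon F\otimes_{F^2}F\to W_{ssq}(F),\qquad \alpha\otimes\alpha'\mapsto\langle\alpha\,|\,\alpha'\rangle,$$ and $\Phi$ is an isomorphism of groups.
   Context: Let $F$ be a field of characteristic $2$. A separated symplectic quadratic space over $F$ is a triple $(V,q,q')$ where $V$ is a finite-dimensional $F$-vector space, $q$ is a totally singular quadratic form on $V$ and $q'$ is a totally singular quadratic form on the dual space $V^*$ (a quadratic form $Q$ is totally singular if $Q(x+y)=Q(x)+Q(y)$ for all $x,y$). Two such spaces $(V_1,q_1,q_1')$, $(V_2,q_2,q_2')$ are isometric if there is a linear isomorphism $L\colon V_1\to V_2$ with $q_2\circ L=q_1$ and $q_1'\circ L^*=q_2'$ ($L^*$ the dual map). Orthogonal sum: $(V_1\oplus V_2,q_1\perp q_2,q_1'\perp q_2')$ using $(V_1\oplus V_2)^*=V_1^*\oplus V_2^*$. For a subspace $U\subset V$, $U^{o}=\{\varphi\in V^*:\varphi(U)=0\}$. The space is metabolic if there exists a subspace $U\subset V$ (of any dimension) with $q(U)=\{0\}$ and $q'(U^o)=\{0\}$. $W_{ssq}(F)$ is the Witt group of separated symplectic quadratic spaces: isometry classes modulo $\varphi\sim\psi$ iff $\varphi\perp\mu\simeq\psi\perp\mu'$ for metabolic $\mu,\mu'$, with operation induced by orthogonal sum. For $\alpha,\alpha'\in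 F$, $\langle\alpha\,|\,\alpha'\rangle$ is the one-dimensional space $(F,q,q')$ with $q(1)=\alpha$ and $q'(1^* )=\alpha'$, where $1^*$ is the dual basis vector of $1$. *)

theory Defs
  imports Main "HOL-Algebra.Group"
begin

text \<open>A finite-dimensional F-vector space V of dimension n is modelled as F^n,
  i.e. functions nat => F vanishing from index n on.  Its dual space V^* is
  identified with F^n via the dual basis, i.e. via the standard pairing.\<close>

definition vecs :: "nat \<Rightarrow> (nat \<Rightarrow> 'a::field) set" where
  "vecs n = {x. \<forall>i\<ge>n. x i = 0}"

definition pairing :: "nat \<Rightarrow> (nat \<Rightarrow> 'a::field) \<Rightarrow> (nat \<Rightarrow> 'a) \<Rightarrow> 'a" where
  "pairing n \<phi> x = (\<Sum>i<n. \<phi> i * x i)"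

text \<open>Totally singular quadratic form on F^n: Q(c x) = c^2 Q(x) and
  Q(x+y) = Q(x) + Q(y) (so the polar bilinear form vanishes).\<close>
definition ts_qform :: "nat \<Rightarrow> ((nat \<Rightarrow> 'a::field) \<Rightarrow> 'a) \<Rightarrow> bool" where
  "ts_qform n Q \<longleftrightarrow>
     (\<forall>x\<in>vecs n. \<forall>c. Q (\<lambda>i. c * x i) = c * c * Q x) \<and>
     (\<forall>x\<in>vecs n. \<forall>y\<in>vecs n. Q (\<lambda>i. x i + y i) = Q x + Q y)"

text \<open>A separated symplectic quadratic space (V,q,q'): dim V, q on V, q' on V^*.\<close>
record 'a ssq_space =
  sdim :: nat
  sq :: "(nat \<Rightarrow> 'a) \<Rightarrow> 'a"
  sq' :: "(nat \<Rightarrow> 'a) \<Rightarrow> 'a"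

definition is_ssq :: "'a::field ssq_space \<Rightarrow> bool" where
  "is_ssq S \<longleftrightarrow> ts_qform (sdim S) (sq S) \<and> ts_qform (sdim S) (sq' S)"

definition matapp :: "nat \<Rightarrow> (nat \<Rightarrow> nat \<Rightarrow> 'a::field) \<Rightarrow> (nat \<Rightarrow> 'a) \<Rightarrow> (nat \<Rightarrow> 'a)" where
  "matapp n M x = (\<lambda>i. if i < n then (\<Sum>j<n. M i j * x j) else 0)"

definition matdual :: "nat \<Rightarrow> (nat \<Rightarrow> nat \<Rightarrow> 'a::field) \<Rightarrow> (nat \<Rightarrow> 'a) \<Rightarrow> (nat \<Rightarrow> 'a)" where
  "matdual n M \<phi> = (\<lambda>j. if j < n then (\<Sum>i<n. M i j * \<phi> i) else 0)"

definition ssq_isometric :: "'a::field ssq_space \<Rightarrow> 'a ssq_space \<Rightarrow> bool" where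
  "ssq_isometric S T \<longleftrightarrow> sdim S = sdim T \<and>
     (\<exists>M. bij_betw (matapp (sdim S) M) (vecs (sdim S)) (vecs (sdim T)) \<and>
          (\<forall>x\<in>vecs (sdim S). sq T (matapp (sdim S) M x) = sq S x) \<and>
          (\<forall>\<phi>\<in>vecs (sdim T). sq' S (matdual (sdim S) M \<phi>) = sq' T \<phi>))"

definition vleft :: "nat \<Rightarrow> (nat \<Rightarrow> 'a::field) \<Rightarrow> (nat \<Rightarrow> 'a)" where
  "vleft n1 x = (\<lambda>i. if i < n1 then x i else 0)"

definition vright :: "nat \<Rightarrow> nat \<Rightarrow> (nat \<Rightarrow> 'a::field) \<Rightarrow> (nat \<Rightarrow> 'a)" where
  "vright n1 n2 x = (\<lambda>i. if i < n2 then x (n1 + i) else 0)"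

definition ssq_orth :: "'a::field ssq_space \<Rightarrow> 'a ssq_space \<Rightarrow> 'a ssq_space" where
  "ssq_orth S T = \<lparr> sdim = sdim S + sdim T,
      sq = (\<lambda>x. sq S (vleft (sdim S) x) + sq T (vright (sdim S) (sdim T) x)),
      sq' = (\<lambda>\<phi>. sq' S (vleft (sdim S) \<phi>) + sq' T (vright (sdim S) (sdim T) \<phi>)) \<rparr>"

definition annihilator :: "nat \<Rightarrow> (nat \<Rightarrow> 'a::field) set \<Rightarrow> (nat \<Rightarrow> 'a) set" where
  "annihilator n U = {\<phi>\<in>vecs n. \<forall>u\<in>U. pairing n \<phi> u = 0}"

definition is_subspace :: "nat \<Rightarrow> (nat \<Rightarrow> 'a::field) set \<Rightarrow> bool" where
  "is_subspace n U \<longleftrightarrow> U \<subseteq> vecs n \<and> (\<lambda>i. 0) \<in> U \<and>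
     (\<forall>x\<in>U. \<forall>y\<in>U. (\<lambda>i. x i + y i) \<in> U) \<and> (\<forall>x\<in>U. \<forall>c. (\<lambda>i. c * x i) \<in> U)"

definition ssq_metabolic :: "'a::field ssq_space \<Rightarrow> bool" where
  "ssq_metabolic S \<longleftrightarrow> (\<exists>U. is_subspace (sdim S) U \<and> (\<forall>u\<in>U. sq S u = 0) \<and>
      (\<forall>\<phi>\<in>annihilator (sdim S) U. sq' S \<phi> = 0))"

definition witt_equiv :: "'a::field ssq_space \<Rightarrow> 'a ssq_space \<Rightarrow> bool" where
  "witt_equiv S T \<longleftrightarrow> (\<exists>M M'. is_ssq M \<and> is_ssq M' \<and> ssq_metabolic M \<and> ssq_metabolic M' \<and>
      ssq_isometric (ssq_orth S M) (ssq_orth T M'))"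

definition witt_class :: "'a::field ssq_space \<Rightarrow> 'a ssq_space set" where
  "witt_class S = {T. is_ssq T \<and> witt_equiv S T}"

definition zero_space :: "'a::field ssq_space" where
  "zero_space = \<lparr> sdim = 0, sq = (\<lambda>x. 0), sq' = (\<lambda>x. 0) \<rparr>"

definition Wssq :: "'a::field itself \<Rightarrow> 'a ssq_space set monoid" where
  "Wssq _ = \<lparr> carrier = {witt_class S | S. is_ssq S},
      mult = (\<lambda>X Y. \<Union>{witt_class (ssq_orth S T) | S T. S \<in> X \<and> T \<in> Y}),
      one = witt_class zero_space \<rparr>"

definition onedim :: "'a::field \<Rightarrow> 'a \<Rightarrow> 'a ssq_space" where
  "onedim a a' = \<lparr> sdim = 1, sq = (\<lambda>x. a * (x 0 * x 0)), sq' = (\<lambda>\<phi>. a' * (\<phi> 0 * \<phi> 0)) \<rparr>"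

text \<open>Free abelian group on F x F: finitely supported integer-valued functions.
  Relations: biadditivity and (s^2 a) (x) c = a (x) (s^2 c).\<close>
definition gen :: "'a \<Rightarrow> 'a \<Rightarrow> ('a \<times> 'a \<Rightarrow> int)" where
  "gen a c = (\<lambda>p. if p = (a, c) then 1 else 0)"

inductive_set tens_rel :: "('a::field \<times> 'a \<Rightarrow> int) set" where
  ladd: "(\<lambda>p. gen (a + b) c p - gen a c p - gen b c p) \<in> tens_rel"
| radd: "(\<lambda>p. gen a (c + d) p - gen a c p - gen a d p) \<in> tens_rel"
| bal: "(\<lambda>p. gen (s * s * a) c p - gen a (s * s * c) p) \<in> tens_rel"
| zero: "(\<lambda>p. 0) \<in> tens_rel"
| add: "f \<in> tens_rel \<Longrightarrow> g \<in> tens_rel \<Longrightarrow> (\<lambda>p. f p + g p) \<in> tens_rel"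
| neg: "f \<in> tens_rel \<Longrightarrow> (\<lambda>p. - f p) \<in> tens_rel"

definition fin_supp :: "('a \<times> 'a \<Rightarrow> int) \<Rightarrow> bool" where
  "fin_supp f \<longleftrightarrow> finite {p. f p \<noteq> 0}"

definition tclass :: "('a::field \<times> 'a \<Rightarrow> int) \<Rightarrow> ('a \<times> 'a \<Rightarrow> int) set" where
  "tclass f = {g. fin_supp g \<and> (\<lambda>p. f p - g p) \<in> tens_rel}"

definition tensor_grp :: "'a::field itself \<Rightarrow> ('a \<times> 'a \<Rightarrow> int) set monoid" where
  "tensor_grp _ = \<lparr> carrier = {tclass f | f. fin_supp f},
      mult = (\<lambda>X Y. {(\<lambda>p. f p + g p) | f g. f \<in> X \<and> g \<in> Y}),
      one = tclass (\<lambda>p. 0) \<rparr>"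

definition pure_tensor :: "'a::field \<Rightarrow> 'a \<Rightarrow> ('a \<times> 'a \<Rightarrow> int) set" where
  "pure_tensor a c = tclass (gen a c)"

end

theory Submission
  imports Defs "HOL-Combinatorics.List_Permutation"
begin


definition teq :: "('a::field \<times> 'a \<Rightarrow> int) \<Rightarrow> ('a \<times> 'a \<Rightarrow> int) \<Rightarrow> bool" where
  "teq f g \<longleftrightarrow> (\<lambda>p. f p - g p) \<in> tens_rel"

lemma teq_refl: "teq f f"
  using tens_rel.zero unfolding teq_def by simp

lemma teq_sym: "teq f g \<Longrightarrow> teq g f"
  unfolding teq_def by (drule tens_rel.neg) simp

lemma teq_trans [trans]: "teq f g \<Longrightarrow> teq g h \<Longrightarrow> teq f h"
  unfolding teq_def by (drule (1) tens_rel.add) simp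

lemma teq_add: "teq f g \<Longrightarrow> teq f' g' \<Longrightarrow> teq (\<lambda>p. f p + f' p) (\<lambda>p. g p + g' p)"
  unfolding teq_def by (drule (1) tens_rel.add) (simp add: algebra_simps)

lemma teq_sum: "finite I \<Longrightarrow> (\<And>i. i \<in> I \<Longrightarrow> teq (f i) (g i)) \<Longrightarrow>
   teq (\<lambda>p. \<Sum>i\<in>I. f i p) (\<lambda>p. \<Sum>i\<in>I. g i p)"
proof (induction I rule: finite_induct)
  case empty then show ?case by (simp add: teq_refl)
next
  case (insert x F)
  then show ?case using teq_add[of "f x" "g x" "\<lambda>p. \<Sum>i\<in>F. f i p" "\<lambda>p. \<Sum>i\<in>F. g i p"] by simp
qed

lemma gen_ladd: "teq (gen (a+b) c) (\<lambda>p. gen a c p + gen b c p)"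
  using tens_rel.ladd[of a b c] unfolding teq_def by (simp add: algebra_simps)

lemma gen_radd: "teq (gen a (c+d)) (\<lambda>p. gen a c p + gen a d p)"
  using tens_rel.radd[of a c d] unfolding teq_def by (simp add: algebra_simps)

lemma gen_bal: "teq (gen (s*s*a) c) (gen a (s*s*c))"
  using tens_rel.bal[of s a c] unfolding teq_def by simp

lemma gen_zero_l: "teq (gen 0 c) (\<lambda>p. 0)"
proof -
  have "(\<lambda>p. - (gen (0+0) c p - gen 0 c p - gen 0 c p)) \<in> tens_rel"
    by (rule tens_rel.neg, rule tens_rel.ladd)
  then show ?thesis unfolding teq_def by simp
qed

lemma gen_zero_r: "teq (gen a 0) (\<lambda>p. 0)"
proof -
  have "(\<lambda>p. - (gen a (0+0) p - gen a 0 p - gen a 0 p)) \<in> tens_rel"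
    by (rule tens_rel.neg, rule tens_rel.radd)
  then show ?thesis unfolding teq_def by simp
qed

lemma gen_suml: "finite I \<Longrightarrow> teq (gen (\<Sum>i\<in>I. a i) c) (\<lambda>p. \<Sum>i\<in>I. gen (a i) c p)"
proof (induction I rule: finite_induct)
  case empty then show ?case using gen_zero_l by simp
next
  case (insert x F)
  have "teq (gen (a x + sum a F) c) (\<lambda>p. gen (a x) c p + gen (sum a F) c p)" by (rule gen_ladd)
  moreover have "teq (\<lambda>p. gen (a x) c p + gen (sum a F) c p) (\<lambda>p. gen (a x) c p + (\<Sum>i\<in>F. gen (a i) c p))"
    by (rule teq_add[OF teq_refl insert.IH])
  ultimately show ?case using insert by (simp add: teq_trans)
qed

lemma gen_sumr: "finite I \<Longrightarrow> teq (gen c (\<Sum>i\<in>I. a i)) (\<lambda>p. \<Sum>i\<in>I. gen c (a i) p)"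
proof (induction I rule: finite_induct)
  case empty then show ?case using gen_zero_r by simp
next
  case (insert x F)
  have "teq (gen c (a x + sum a F)) (\<lambda>p. gen c (a x) p + gen c (sum a F) p)" by (rule gen_radd)
  moreover have "teq (\<lambda>p. gen c (a x) p + gen c (sum a F) p) (\<lambda>p. gen c (a x) p + (\<Sum>i\<in>F. gen c (a i) p))"
    by (rule teq_add[OF teq_refl insert.IH])
  ultimately show ?case using insert by (simp add: teq_trans)
qed

lemma gen_double:
  assumes ch: "(2::'a::field) = 0"
  shows "teq (\<lambda>p. gen (a::'a) c p + gen a c p) (\<lambda>p. 0)"
proof -
  have "a + a = 0" using ch by (metis mult_2 mult_zero_left)
  have h1: "teq (\<lambda>p. gen a c p + gen a c p) (gen (a+a) c)" by (rule teq_sym[OF gen_ladd])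
  have "teq (gen (a+a) c) (\<lambda>p. 0)" using gen_zero_l[of c] \<open>a+a=0\<close> by (simp only:)
  from teq_trans[OF h1 this] show ?thesis .
qed


definition ev :: "nat \<Rightarrow> nat \<Rightarrow> 'a::field" where
  "ev k = (\<lambda>j. if j = k then 1 else 0)"

lemma ev_vecs: "k < n \<Longrightarrow> ev k \<in> vecs n"
  by (auto simp: ev_def vecs_def)

lemma sum_ev: "j < n \<Longrightarrow> (\<Sum>k<n. f k * ev j k) = (f j :: 'a::field)"
proof -
  assume j: "j < n"
  have "(\<Sum>k<n. f k * ev j k) = (\<Sum>k<n. if k = j then f k else 0)" by (rule sum.cong) (auto simp: ev_def)
  then show ?thesis using j by simp
qed

lemma sum_ev': "j < n \<Longrightarrow> (\<Sum>k<n. ev j k * f k) = (f j :: 'a::field)"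
  using sum_ev[of j n f] by (simp add: mult.commute)

lemma sum_ev_alt: "j < n \<Longrightarrow> (\<Sum>k<n. M k i * ev j k) = (M j i :: 'a::field)"
  using sum_ev[of j n "\<lambda>k. M k i"] by simp

lemma ts_scale: "ts_qform n Q \<Longrightarrow> x \<in> vecs n \<Longrightarrow> Q (\<lambda>i. c * x i) = c * c * Q x"
  unfolding ts_qform_def by blast

lemma ts_add: "ts_qform n Q \<Longrightarrow> x \<in> vecs n \<Longrightarrow> y \<in> vecs n \<Longrightarrow> Q (\<lambda>i. x i + y i) = Q x + Q y"
  unfolding ts_qform_def by blast

lemma ts_zero: "ts_qform n Q \<Longrightarrow> Q (\<lambda>i. 0) = 0"
proof -
  assume "ts_qform n Q"
  then have "\<forall>x\<in>vecs n. \<forall>c. Q (\<lambda>i. c * x i) = c * c * Q x" unfolding ts_qform_def by blast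
  moreover have z: "(\<lambda>i. 0::'a) \<in> vecs n" by (simp add: vecs_def)
  ultimately have "\<forall>c. Q (\<lambda>i. c * (0::'a)) = c * c * Q (\<lambda>i. 0)" by (rule bspec)
  then have "Q (\<lambda>i. 0 * (0::'a)) = 0 * 0 * Q (\<lambda>i. 0)" by (rule spec)
  then show ?thesis by simp
qed

lemma qform_coord_aux:
  assumes q: "ts_qform n Q" and x: "x \<in> vecs n" and k: "k \<le> n"
  shows "Q (\<lambda>i. if i < k then x i else 0) = (\<Sum>i<k. Q (ev i) * (x i * x i))"
  using k
proof (induction k)
  case 0 then show ?case using ts_zero[OF q] by simp
next
  case (Suc k)
  let ?y = "\<lambda>i. if i < k then x i else (0::'a)"
  let ?z = "\<lambda>i. x k * ev k i"
  have yv: "?y \<in> vecs n" using x by (auto simp: vecs_def)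
  have ev: "ev k \<in> vecs n" using Suc.prems by (simp add: ev_vecs)
  have zv: "?z \<in> vecs n" using ev by (auto simp: vecs_def)
  have eq: "(\<lambda>i. if i < Suc k then x i else 0) = (\<lambda>i. ?y i + ?z i)"
    by (auto simp: ev_def fun_eq_iff less_Suc_eq)
  have "Q (\<lambda>i. ?y i + ?z i) = Q ?y + Q ?z" by (rule ts_add[OF q yv zv])
  moreover have "Q ?z = x k * x k * Q (ev k)" by (rule ts_scale[OF q ev])
  ultimately show ?case using Suc by (simp add: eq algebra_simps)
qed

lemma qform_coord:
  assumes q: "ts_qform n Q" and x: "x \<in> vecs n"
  shows "Q x = (\<Sum>i<n. Q (ev i) * (x i * x i))"
proof -
  have "(\<lambda>i. if i < n then x i else 0) = x" using x by (auto simp: vecs_def)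
  then show ?thesis using qform_coord_aux[OF q x order_refl] by simp
qed

definition co :: "'a::field ssq_space \<Rightarrow> nat \<Rightarrow> 'a" where
  "co S i = sq S (ev i)"

definition co' :: "'a::field ssq_space \<Rightarrow> nat \<Rightarrow> 'a" where
  "co' S i = sq' S (ev i)"

lemma sq_coord: "is_ssq S \<Longrightarrow> x \<in> vecs (sdim S) \<Longrightarrow> sq S x = (\<Sum>i<sdim S. co S i * (x i * x i))"
  unfolding is_ssq_def co_def using qform_coord by blast

lemma sq'_coord: "is_ssq S \<Longrightarrow> x \<in> vecs (sdim S) \<Longrightarrow> sq' S x = (\<Sum>i<sdim S. co' S i * (x i * x i))"
  unfolding is_ssq_def co'_def using qform_coord by blast

definition coefl :: "'a::field ssq_space \<Rightarrow> ('a \<times> 'a) list" where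
  "coefl S = map (\<lambda>i. (co S i, co' S i)) [0..<sdim S]"

definition cnt :: "('a \<times> 'a) list \<Rightarrow> ('a \<times> 'a \<Rightarrow> int)" where
  "cnt L = (\<lambda>p. int (count (mset L) p))"

definition tsum :: "'a::field ssq_space \<Rightarrow> ('a \<times> 'a \<Rightarrow> int)" where
  "tsum S = cnt (coefl S)"

lemma cnt_append: "cnt (L1 @ L2) = (\<lambda>p. cnt L1 p + cnt L2 p)"
  by (simp add: cnt_def fun_eq_iff)

lemma cnt_single: "cnt [y] = gen (fst y) (snd y)"
  by (auto simp: cnt_def gen_def fun_eq_iff)

lemma cnt_map: "cnt (map f [0..<n]) = (\<lambda>p. \<Sum>i<n. gen (fst (f i)) (snd (f i)) p)"
proof (induction n)
  case 0 then show ?case by (simp add: cnt_def)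
next
  case (Suc n)
  have "map f [0..<Suc n] = map f [0..<n] @ [f n]" by simp
  then have "cnt (map f [0..<Suc n]) = (\<lambda>p. cnt (map f [0..<n]) p + cnt [f n] p)"
    by (simp only: cnt_append)
  then show ?case using Suc by (simp add: cnt_single)
qed

lemma tsum_sum: "tsum S = (\<lambda>p. \<Sum>i<sdim S. gen (co S i) (co' S i) p)"
  unfolding tsum_def coefl_def cnt_map by simp

section \<open>Isometry invariance\<close>

lemma matapp_vecs: "matapp n M x \<in> vecs n"
  by (simp add: matapp_def vecs_def)

lemma matdual_vecs: "matdual n M x \<in> vecs n"
  by (simp add: matdual_def vecs_def)

lemma iso_invariant:
  assumes S: "is_ssq S" and T: "is_ssq T" and I: "ssq_isometric S T"
  shows "teq (tsum S) (tsum T)"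
proof -
  let ?n = "sdim S"
  from I obtain M where nT: "sdim T = ?n" and
    q: "\<forall>x\<in>vecs ?n. sq T (matapp ?n M x) = sq S x" and
    q': "\<forall>\<phi>\<in>vecs ?n. sq' S (matdual ?n M \<phi>) = sq' T \<phi>"
    unfolding ssq_isometric_def by auto
  have coS: "co S j = (\<Sum>i<?n. M i j * M i j * co T i)" if j: "j < ?n" for j
  proof -
    have "co S j = sq T (matapp ?n M (ev j))" using q ev_vecs[OF j] unfolding co_def by metis
    also have "\<dots> = (\<Sum>i<?n. co T i * (matapp ?n M (ev j) i * matapp ?n M (ev j) i))"
      using sq_coord[OF T] matapp_vecs nT by metis
    also have "\<dots> = (\<Sum>i<?n. co T i * (M i j * M i j))"
      by (rule sum.cong) (simp_all add: matapp_def sum_ev[OF j])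
    also have "\<dots> = (\<Sum>i<?n. M i j * M i j * co T i)"
      by (simp add: mult.commute)
    finally show ?thesis .
  qed
  have coT: "co' T k = (\<Sum>j<?n. M k j * M k j * co' S j)" if k: "k < ?n" for k
  proof -
    have "co' T k = sq' S (matdual ?n M (ev k))" using q' ev_vecs[OF k] unfolding co'_def by metis
    also have "\<dots> = (\<Sum>j<?n. co' S j * (matdual ?n M (ev k) j * matdual ?n M (ev k) j))"
      using sq'_coord[OF S] matdual_vecs by metis
    also have "\<dots> = (\<Sum>j<?n. co' S j * (M k j * M k j))"
      by (rule sum.cong) (simp_all add: matdual_def sum_ev_alt[OF k])
    also have "\<dots> = (\<Sum>j<?n. M k j * M k j * co' S j)"
      by (simp add: mult.commute)
    finally show ?thesis .
  qed
  have e1: "tsum S = (\<lambda>p. \<Sum>j<?n. gen (\<Sum>i<?n. M i j * M i j * co T i) (co' S j) p)"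
    unfolding tsum_sum using coS by (simp add: fun_eq_iff)
  have e2: "(\<lambda>p. \<Sum>i<?n. gen (co T i) (\<Sum>j<?n. M i j * M i j * co' S j) p) = tsum T"
    unfolding tsum_sum using coT nT by (simp add: fun_eq_iff)
  have "teq (tsum S) (\<lambda>p. \<Sum>j<?n. gen (\<Sum>i<?n. M i j * M i j * co T i) (co' S j) p)"
    by (subst e1, rule teq_refl)
  also have "teq \<dots> (\<lambda>p. \<Sum>j<?n. \<Sum>i<?n. gen (M i j * M i j * co T i) (co' S j) p)"
    by (rule teq_sum) (auto intro: gen_suml)
  also have "teq \<dots> (\<lambda>p. \<Sum>i<?n. \<Sum>j<?n. gen (co T i) (M i j * M i j * co' S j) p)"
  proof -
    have "teq (\<lambda>p. \<Sum>j<?n. \<Sum>i<?n. gen (M i j * M i j * co T i) (co' S j) p) (\<lambda>p. \<Sum>j<?n. \<Sum>i<?n. gen (co T i) (M i j * M i j * co' S j) p)"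
      by (rule teq_sum, simp, rule teq_sum) (auto intro: gen_bal)
    moreover have "(\<lambda>p. \<Sum>j<?n. \<Sum>i<?n. gen (co T i) (M i j * M i j * co' S j) p) = (\<lambda>p. \<Sum>i<?n. \<Sum>j<?n. gen (co T i) (M i j * M i j * co' S j) p)"
      by (rule ext, rule sum.swap)
    ultimately show ?thesis by simp
  qed
  also have "teq \<dots> (\<lambda>p. \<Sum>i<?n. gen (co T i) (\<Sum>j<?n. M i j * M i j * co' S j) p)"
    by (rule teq_sum) (auto intro: teq_sym[OF gen_sumr])
  also have "teq \<dots> (tsum T)"
    by (subst e2[symmetric], rule teq_refl)
  finally show ?thesis .
qed



lemma ch2_add_self: "(2::'a::field) = 0 \<Longrightarrow> (x::'a) + x = 0"
  by (metis mult_2 mult_zero_left)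

lemma ch2_neg: "(2::'a::field) = 0 \<Longrightarrow> - (x::'a) = x"
  using ch2_add_self[of x] by (simp add: add_eq_0_iff)

lemma ch2_eq: "(2::'a::field) = 0 \<Longrightarrow> (x::'a) + y = 0 \<Longrightarrow> x = y"
  using ch2_neg[of y] by (simp add: add_eq_0_iff)

lemma ch2_sq_add: "(2::'a::field) = 0 \<Longrightarrow> ((x::'a) + y) * (x + y) = x * x + y * y"
proof -
  assume ch: "(2::'a) = 0"
  have "(x + y) * (x + y) = x * x + y * y + (x*y + x*y)" by (simp add: algebra_simps)
  then show ?thesis using ch2_add_self[OF ch, of "x*y"] by simp
qed

lemma ch2_sq_sum: "(2::'a::field) = 0 \<Longrightarrow> finite I \<Longrightarrow>
   (\<Sum>i\<in>I. f i) * (\<Sum>i\<in>I. f i) = (\<Sum>i\<in>I. f i * (f i :: 'a))"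
proof -
  assume ch: "(2::'a) = 0"
  show "finite I \<Longrightarrow> ?thesis"
    by (induction I rule: finite_induct) (simp_all add: ch2_sq_add[OF ch])
qed

section \<open>Metabolic spaces have trivial invariant\<close>

definition vI :: "nat set \<Rightarrow> (nat \<Rightarrow> 'a::field) set" where
  "vI I = {x. \<forall>i. i \<notin> I \<longrightarrow> x i = 0}"

definition Qs :: "nat set \<Rightarrow> (nat \<Rightarrow> 'a::field) \<Rightarrow> (nat \<Rightarrow> 'a) \<Rightarrow> 'a" where
  "Qs I a x = (\<Sum>i\<in>I. a i * (x i * x i))"

definition pr :: "nat set \<Rightarrow> (nat \<Rightarrow> 'a::field) \<Rightarrow> (nat \<Rightarrow> 'a) \<Rightarrow> 'a" where
  "pr I f x = (\<Sum>i\<in>I. f i * x i)"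

definition subsp :: "nat set \<Rightarrow> (nat \<Rightarrow> 'a::field) set \<Rightarrow> bool" where
  "subsp I U \<longleftrightarrow> U \<subseteq> vI I \<and> (\<lambda>i. 0) \<in> U \<and>
     (\<forall>x\<in>U. \<forall>y\<in>U. (\<lambda>i. x i + y i) \<in> U) \<and> (\<forall>x\<in>U. \<forall>c. (\<lambda>i. c * x i) \<in> U)"

lemma metab_core:
  fixes a a' :: "nat \<Rightarrow> 'a::field"
  assumes ch: "(2::'a) = 0"
  shows "finite I \<Longrightarrow> subsp I U \<Longrightarrow> (\<forall>u\<in>U. Qs I a u = 0) \<Longrightarrow>
    (\<forall>\<phi>\<in>vI I. (\<forall>u\<in>U. pr I \<phi> u = 0) \<longrightarrow> Qs I a' \<phi> = 0) \<Longrightarrow>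
    teq (\<lambda>p. \<Sum>i\<in>I. gen (a i) (a' i) p) (\<lambda>p. 0)"
proof (induction "card I" arbitrary: I a' U rule: less_induct)
  case less
  note fin = less.prems(1) and sub = less.prems(2) and qU = less.prems(3) and ann = less.prems(4)
  show ?case
  proof (cases "\<exists>u\<in>U. \<exists>k\<in>I. u k \<noteq> 0")
    case False
    have "a' k = 0" if k: "k \<in> I" for k
    proof -
      have "ev k \<in> vI I" using k by (auto simp: vI_def ev_def)
      moreover have "pr I (ev k) u = 0" if "u \<in> U" for u
        using False that unfolding pr_def by (auto intro!: sum.neutral)
      ultimately have "Qs I a' (ev k) = 0" using ann by blast
      moreover have "Qs I a' (ev k) = a' k"
      proof -
        have "Qs I a' (ev k) = (\<Sum>i\<in>I. if i = k then a' i else 0)"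
          unfolding Qs_def by (rule sum.cong) (auto simp: ev_def)
        then show ?thesis using k fin by simp
      qed
      ultimately show ?thesis by simp
    qed
    then have "teq (\<lambda>p. \<Sum>i\<in>I. gen (a i) (a' i) p) (\<lambda>p. \<Sum>i\<in>I. (\<lambda>p. 0) p)"
      using fin by (intro teq_sum) (auto intro: gen_zero_r)
    then show ?thesis by simp
  next
    case True
    then obtain u k where u: "u \<in> U" and k: "k \<in> I" and uk: "u k \<noteq> 0" by blast
    define v where "v = (\<lambda>i. inverse (u k) * u i)"
    have addU: "\<And>x y. x \<in> U \<Longrightarrow> y \<in> U \<Longrightarrow> (\<lambda>i. x i + y i) \<in> U"
      using sub unfolding subsp_def by blast
    have scU: "\<And>x c. x \<in> U \<Longrightarrow> (\<lambda>i. c * x i) \<in> U"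
      using sub unfolding subsp_def by blast
    have vU: "v \<in> U" unfolding v_def by (rule scU[OF u])
    have vk: "v k = 1" using uk by (simp add: v_def)
    define I' where "I' = I - {k}"
    have finI': "finite I'" using fin by (simp add: I'_def)
    have cardI': "card I' < card I" unfolding I'_def by (rule card_Diff1_less[OF fin k])
    have sumI: "\<And>g. sum g I = g k + sum g I'" using fin k by (simp add: I'_def sum.remove)
    define b' where "b' = (\<lambda>i. a' i + v i * v i * a' k)"
    define U' where "U' = {x\<in>U. x k = 0}"
    have "Qs I a v = 0" using qU vU by blast
    then have "a k + (\<Sum>i\<in>I'. v i * v i * a i) = 0"
      unfolding Qs_def sumI by (simp add: vk mult_ac)
    then have ak: "a k = (\<Sum>i\<in>I'. v i * v i * a i)" using ch2_eq[OF ch] by blast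
    have B1: "teq (\<lambda>p. \<Sum>i\<in>I'. gen (a i) (b' i) p) (\<lambda>p. \<Sum>i\<in>I. gen (a i) (a' i) p)"
    proof -
      have "teq (\<lambda>p. \<Sum>i\<in>I'. gen (a i) (b' i) p)
                (\<lambda>p. \<Sum>i\<in>I'. (\<lambda>p. gen (a i) (a' i) p + gen (a i) (v i * v i * a' k) p) p)"
        using finI' unfolding b'_def by (intro teq_sum) (auto intro: gen_radd)
      also have "teq \<dots> (\<lambda>p. \<Sum>i\<in>I'. (\<lambda>p. gen (a i) (a' i) p + gen (v i * v i * a i) (a' k) p) p)"
        using finI' by (intro teq_sum teq_add teq_refl teq_sym[OF gen_bal])
      also have "\<dots> = (\<lambda>p. (\<Sum>i\<in>I'. gen (a i) (a' i) p) + (\<Sum>i\<in>I'. gen (v i * v i * a i) (a' k) p))"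
        by (simp add: sum.distrib)
      also have "teq \<dots> (\<lambda>p. (\<Sum>i\<in>I'. gen (a i) (a' i) p) + gen (\<Sum>i\<in>I'. v i * v i * a i) (a' k) p)"
        using finI' by (intro teq_add teq_refl teq_sym[OF gen_suml])
      also have "\<dots> = (\<lambda>p. \<Sum>i\<in>I. gen (a i) (a' i) p)"
        unfolding sumI ak[symmetric] by (simp add: add.commute)
      finally show ?thesis .
    qed
    have sub': "subsp I' U'"
      using sub unfolding subsp_def U'_def I'_def vI_def by auto
    have q': "\<forall>x\<in>U'. Qs I' a x = 0"
    proof
      fix x assume "x \<in> U'"
      then have "x \<in> U" "x k = 0" by (auto simp: U'_def)
      then show "Qs I' a x = 0" using qU unfolding Qs_def sumI by auto
    qed
    have ann': "\<forall>\<psi>\<in>vI I'. (\<forall>x\<in>U'. pr I' \<psi> x = 0) \<longrightarrow> Qs I' b' \<psi> = 0"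
    proof (intro ballI impI)
      fix \<psi> assume psi: "\<psi> \<in> vI I'" and pz: "\<forall>x\<in>U'. pr I' \<psi> x = 0"
      define t where "t = pr I' \<psi> v"
      define \<phi> where "\<phi> = (\<lambda>i. if i = k then - t else \<psi> i)"
      have phiv: "\<phi> \<in> vI I" using psi k unfolding vI_def \<phi>_def I'_def by auto
      have "pr I \<phi> w = 0" if w: "w \<in> U" for w
      proof -
        let ?x = "\<lambda>i. w i + (- w k) * v i"
        have "?x \<in> U" by (rule addU[OF w scU[OF vU]])
        moreover have "?x k = 0" using vk by simp
        ultimately have "pr I' \<psi> ?x = 0" using pz by (auto simp: U'_def)
        then have "pr I' \<psi> w - w k * t = 0"
          unfolding pr_def t_def by (simp add: algebra_simps sum.distrib sum_distrib_left sum_subtractf)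
        moreover have "pr I \<phi> w = - t * w k + pr I' \<psi> w"
          unfolding pr_def sumI by (simp add: \<phi>_def I'_def)
        ultimately show ?thesis by (simp add: algebra_simps)
      qed
      then have "Qs I a' \<phi> = 0" using ann phiv by blast
      moreover have "Qs I a' \<phi> = a' k * (t * t) + Qs I' a' \<psi>"
        unfolding Qs_def sumI by (simp add: \<phi>_def I'_def)
      moreover have "t * t = (\<Sum>i\<in>I'. \<psi> i * v i * (\<psi> i * v i))"
        unfolding t_def pr_def by (rule ch2_sq_sum[OF ch finI'])
      moreover have "Qs I' b' \<psi> = Qs I' a' \<psi> + a' k * (\<Sum>i\<in>I'. \<psi> i * v i * (\<psi> i * v i))"
        unfolding Qs_def b'_def by (simp add: algebra_simps sum.distrib sum_distrib_left)
      ultimately show "Qs I' b' \<psi> = 0" by (simp add: add.commute)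
    qed
    have "teq (\<lambda>p. \<Sum>i\<in>I'. gen (a i) (b' i) p) (\<lambda>p. 0)"
      using less.hyps[OF cardI' finI' sub' q' ann'] .
    then show ?thesis using teq_trans[OF teq_sym[OF B1]] by blast
  qed
qed



lemma vI_lessThan: "vI {..<n} = vecs n"
  by (auto simp: vI_def vecs_def)

lemma metabolic_teq0:
  assumes ch: "(2::'a::field) = 0" and S: "is_ssq (S::'a ssq_space)" and m: "ssq_metabolic S"
  shows "teq (tsum S) (\<lambda>p. 0)"
proof -
  let ?n = "sdim S"
  from m obtain U where U: "is_subspace ?n U" and qU: "\<forall>u\<in>U. sq S u = 0"
    and q'U: "\<forall>\<phi>\<in>annihilator ?n U. sq' S \<phi> = 0"
    unfolding ssq_metabolic_def by blast
  have Uv: "U \<subseteq> vecs ?n" using U by (simp add: is_subspace_def)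
  have sub: "subsp {..<?n} U" using U unfolding is_subspace_def subsp_def vI_lessThan by blast
  have q: "\<forall>u\<in>U. Qs {..<?n} (co S) u = 0"
  proof
    fix u assume u: "u \<in> U"
    then have "u \<in> vecs ?n" using Uv by auto
    then show "Qs {..<?n} (co S) u = 0" using qU u sq_coord[OF S] unfolding Qs_def by metis
  qed
  have a: "\<forall>\<phi>\<in>vI {..<?n}. (\<forall>u\<in>U. pr {..<?n} \<phi> u = 0) \<longrightarrow> Qs {..<?n} (co' S) \<phi> = 0"
  proof (intro ballI impI)
    fix \<phi> assume p: "\<phi> \<in> vI {..<?n}" and z: "\<forall>u\<in>U. pr {..<?n} \<phi> u = 0"
    have "\<phi> \<in> annihilator ?n U" using p z unfolding annihilator_def vI_lessThan pr_def pairing_def by auto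
    then have "sq' S \<phi> = 0" using q'U by blast
    then show "Qs {..<?n} (co' S) \<phi> = 0" using sq'_coord[OF S] p unfolding vI_lessThan Qs_def by auto
  qed
  have "teq (\<lambda>p. \<Sum>i\<in>{..<?n}. gen (co S i) (co' S i) p) (\<lambda>p. 0)"
    by (rule metab_core[OF ch finite_lessThan sub q a])
  then show ?thesis by (simp add: tsum_sum)
qed

lemma vleft_vecs: "vleft n1 x \<in> vecs n1" by (simp add: vleft_def vecs_def)
lemma vright_vecs: "vright n1 n2 x \<in> vecs n2" by (simp add: vright_def vecs_def)

lemma ts_orth:
  assumes "ts_qform n1 Q1" "ts_qform n2 Q2"
  shows "ts_qform (n1 + n2) (\<lambda>x. Q1 (vleft n1 x) + Q2 (vright n1 n2 x))"
proof -
  have l1: "vleft n1 (\<lambda>i. c * x i) = (\<lambda>i. c * vleft n1 x i)" for c x by (auto simp: vleft_def)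
  have l2: "vright n1 n2 (\<lambda>i. c * x i) = (\<lambda>i. c * vright n1 n2 x i)" for c x by (auto simp: vright_def)
  have l3: "vleft n1 (\<lambda>i. x i + y i) = (\<lambda>i. vleft n1 x i + vleft n1 y i)" for x y by (auto simp: vleft_def)
  have l4: "vright n1 n2 (\<lambda>i. x i + y i) = (\<lambda>i. vright n1 n2 x i + vright n1 n2 y i)" for x y by (auto simp: vright_def)
  show ?thesis unfolding ts_qform_def
    by (simp add: l1 l2 l3 l4 ts_scale[OF assms(1) vleft_vecs] ts_scale[OF assms(2) vright_vecs]
        ts_add[OF assms(1) vleft_vecs vleft_vecs] ts_add[OF assms(2) vright_vecs vright_vecs] algebra_simps)
qed

lemma is_ssq_orth: "is_ssq S \<Longrightarrow> is_ssq T \<Longrightarrow> is_ssq (ssq_orth S T)"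
  unfolding is_ssq_def ssq_orth_def by (simp add: ts_orth)

lemma sdim_orth: "sdim (ssq_orth S T) = sdim S + sdim T"
  by (simp add: ssq_orth_def)

lemma coefl_orth:
  assumes S: "is_ssq S" and T: "is_ssq T"
  shows "coefl (ssq_orth S T) = coefl S @ coefl T"
proof -
  let ?n1 = "sdim S" and ?n2 = "sdim T"
  have zS: "sq S (\<lambda>i. 0) = 0" "sq' S (\<lambda>i. 0) = 0" "sq T (\<lambda>i. 0) = 0" "sq' T (\<lambda>i. 0) = 0"
    using S T unfolding is_ssq_def by (auto intro: ts_zero)
  have c1: "co (ssq_orth S T) i = co S i \<and> co' (ssq_orth S T) i = co' S i" if "i < ?n1" for i
  proof -
    have e1: "vleft ?n1 (ev i) = ev i" using that by (auto simp: vleft_def ev_def)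
    have e2: "vright ?n1 ?n2 (ev i) = (\<lambda>j. 0)" using that by (auto simp: vright_def ev_def)
    show ?thesis by (simp add: co_def co'_def ssq_orth_def zS e1 e2)
  qed
  have c2: "co (ssq_orth S T) i = co T (i - ?n1) \<and> co' (ssq_orth S T) i = co' T (i - ?n1)"
    if "?n1 \<le> i" "i < ?n1 + ?n2" for i
  proof -
    have e1: "vleft ?n1 (ev i) = (\<lambda>j. 0)" using that by (auto simp: vleft_def ev_def)
    have e2: "vright ?n1 ?n2 (ev i) = ev (i - ?n1)"
      using that by (auto simp: vright_def ev_def fun_eq_iff)
    show ?thesis by (simp add: co_def co'_def ssq_orth_def zS e1 e2)
  qed
  show ?thesis
    by (rule nth_equalityI) (auto simp: coefl_def nth_append sdim_orth c1 c2)
qed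


lemma tsum_orth: "is_ssq S \<Longrightarrow> is_ssq T \<Longrightarrow> tsum (ssq_orth S T) = (\<lambda>p. tsum S p + tsum T p)"
  by (simp add: tsum_def coefl_orth cnt_append)

section \<open>Diagonal spaces\<close>

definition dg :: "('a::field \<times> 'a) list \<Rightarrow> 'a ssq_space" where
  "dg L = \<lparr> sdim = length L, sq = (\<lambda>x. \<Sum>i<length L. fst (L!i) * (x i * x i)),
            sq' = (\<lambda>x. \<Sum>i<length L. snd (L!i) * (x i * x i)) \<rparr>"

lemma ts_diag:
  assumes ch: "(2::'a::field) = 0"
  shows "ts_qform n (\<lambda>x. \<Sum>i<n. (a i :: 'a) * (x i * x i))"
  unfolding ts_qform_def
proof (intro conjI ballI allI)
  fix x :: "nat \<Rightarrow> 'a" and c :: 'a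
  show "(\<Sum>i<n. a i * (c * x i * (c * x i))) = c * c * (\<Sum>i<n. a i * (x i * x i))"
    by (simp add: sum_distrib_left mult_ac)
next
  fix x y :: "nat \<Rightarrow> 'a"
  show "(\<Sum>i<n. a i * ((x i + y i) * (x i + y i))) = (\<Sum>i<n. a i * (x i * x i)) + (\<Sum>i<n. a i * (y i * y i))"
  proof -
    have "\<And>i. (x i + y i) * (x i + y i) = x i * x i + y i * y i" using ch2_sq_add[OF ch] by blast
    then show ?thesis by (simp only: distrib_left sum.distrib)
  qed
qed

lemma is_ssq_dg: "(2::'a::field) = 0 \<Longrightarrow> is_ssq (dg (L :: ('a \<times> 'a) list))"
  unfolding is_ssq_def dg_def using ts_diag[where a="\<lambda>i. fst (L!i)"] ts_diag[where a="\<lambda>i. snd (L!i)"] by simp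

lemma coefl_dg: "coefl (dg L) = L"
proof (rule nth_equalityI)
  show "length (coefl (dg L)) = length L" by (simp add: coefl_def dg_def)
next
  fix i assume "i < length (coefl (dg L))"
  then have i: "i < length L" by (simp add: coefl_def dg_def)
  have "(\<Sum>j<length L. f j * (ev i j * ev i j)) = f i" for f :: "nat \<Rightarrow> 'a"
  proof -
    have "(\<Sum>j<length L. f j * (ev i j * ev i j)) = (\<Sum>j<length L. if j = i then f j else 0)"
      by (rule sum.cong) (auto simp: ev_def)
    then show ?thesis using i by simp
  qed
  then show "coefl (dg L) ! i = L ! i" using i by (simp add: coefl_def dg_def co_def co'_def)
qed

lemma tsum_dg: "tsum (dg L) = cnt L"
  by (simp add: tsum_def coefl_dg)

lemma onedim_dg: "onedim a a' = dg [(a, a')]"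
  by (simp add: onedim_def dg_def)

section \<open>Permutation isometries\<close>

lemma perm_iso:
  fixes S T :: "'a::field ssq_space"
  assumes S: "is_ssq S" and T: "is_ssq T" and m: "mset (coefl S) = mset (coefl T)"
  shows "ssq_isometric S T"
proof -
  let ?n = "sdim S"
  have len: "length (coefl S) = length (coefl T)" using m by (metis size_mset)
  then have nT: "sdim T = ?n" by (simp add: coefl_def)
  obtain f where f: "bij_betw f {..<?n} {..<?n}" and fe: "\<forall>i<?n. coefl S ! i = coefl T ! (f i)"
    using permutation_Ex_bij[OF m] len nT by (auto simp: coefl_def)
  have fn: "f j < ?n" if "j < ?n" for j using f that by (auto dest: bij_betwE)
  have cS: "co S i = co T (f i)" "co' S i = co' T (f i)" if "i < ?n" for i
    using fe that fn[OF that] nT by (auto simp: coefl_def)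
  define g where "g = inv_into {..<?n} f"
  have gf: "g (f j) = j" if "j < ?n" for j using f that unfolding g_def by (simp add: bij_betw_inv_into_left)
  have fg: "f (g i) = i" if "i < ?n" for i using f that unfolding g_def by (simp add: bij_betw_inv_into_right)
  have gn: "g i < ?n" if "i < ?n" for i
    using f that unfolding g_def by (metis bij_betwE bij_betw_inv_into lessThan_iff)
  define M where "M = (\<lambda>i j. if i = f j then (1::'a) else 0)"
  have ma: "matapp ?n M x i = (if i < ?n then x (g i) else 0)" for x i
  proof (cases "i < ?n")
    case True
    have "(\<Sum>j<?n. M i j * x j) = (\<Sum>j<?n. (\<lambda>i'. if i = i' then x (g i') else 0) (f j))"
      by (rule sum.cong) (auto simp: M_def gf)
    also have "\<dots> = (\<Sum>i'<?n. if i = i' then x (g i') else 0)"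
      by (rule sum.reindex_bij_betw[OF f])
    also have "\<dots> = x (g i)" using True by simp
    finally show ?thesis using True by (simp add: matapp_def)
  qed (simp add: matapp_def)
  have md: "matdual ?n M \<phi> j = (if j < ?n then \<phi> (f j) else 0)" for \<phi> j
  proof (cases "j < ?n")
    case True
    have "(\<Sum>i<?n. M i j * \<phi> i) = (\<Sum>i<?n. if i = f j then \<phi> i else 0)"
      by (rule sum.cong) (auto simp: M_def)
    also have "\<dots> = \<phi> (f j)" using fn[OF True] by simp
    finally show ?thesis using True by (simp add: matdual_def)
  qed (simp add: matdual_def)
  have bij: "bij_betw (matapp ?n M) (vecs ?n) (vecs ?n)"
  proof (rule bij_betw_imageI)
    show "inj_on (matapp ?n M) (vecs ?n)"
    proof (rule inj_onI)
      fix x y assume x: "x \<in> vecs ?n" and y: "y \<in> vecs ?n" and e: "matapp ?n M x = matapp ?n M y"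
      show "x = y"
      proof
        fix j show "x j = y j"
        proof (cases "j < ?n")
          case True
          have "matapp ?n M x (f j) = matapp ?n M y (f j)" using e by simp
          then show ?thesis using True fn[OF True] by (simp add: ma gf)
        next
          case False then show ?thesis using x y by (simp add: vecs_def)
        qed
      qed
    qed
    show "matapp ?n M ` vecs ?n = vecs ?n"
    proof
      show "matapp ?n M ` vecs ?n \<subseteq> vecs ?n" using matapp_vecs by blast
      show "vecs ?n \<subseteq> matapp ?n M ` vecs ?n"
      proof
        fix y :: "nat \<Rightarrow> 'a" assume y: "y \<in> vecs ?n"
        define x where "x = (\<lambda>j. if j < ?n then y (f j) else 0)"
        have "x \<in> vecs ?n" by (simp add: x_def vecs_def)
        moreover have "matapp ?n M x = y"
          using y by (auto simp: fun_eq_iff ma x_def gn fg vecs_def)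
        ultimately show "y \<in> matapp ?n M ` vecs ?n" by blast
      qed
    qed
  qed
  have q: "sq T (matapp ?n M x) = sq S x" if x: "x \<in> vecs ?n" for x
  proof -
    have "sq T (matapp ?n M x) = (\<Sum>i<?n. co T i * (x (g i) * x (g i)))"
      using sq_coord[OF T matapp_vecs[of ?n M x, folded nT]] nT by (simp add: ma)
    also have "\<dots> = (\<Sum>j<?n. co T (f j) * (x (g (f j)) * x (g (f j))))"
      by (rule sum.reindex_bij_betw[OF f, symmetric])
    also have "\<dots> = (\<Sum>j<?n. co S j * (x j * x j))"
      by (rule sum.cong) (auto simp: gf cS)
    also have "\<dots> = sq S x" using sq_coord[OF S x] by simp
    finally show ?thesis .
  qed
  have q': "sq' S (matdual ?n M \<phi>) = sq' T \<phi>" if p: "\<phi> \<in> vecs ?n" for \<phi>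
  proof -
    have "sq' S (matdual ?n M \<phi>) = (\<Sum>j<?n. co' S j * (\<phi> (f j) * \<phi> (f j)))"
      using sq'_coord[OF S matdual_vecs[of ?n M \<phi>]] by (simp add: md)
    also have "\<dots> = (\<Sum>j<?n. co' T (f j) * (\<phi> (f j) * \<phi> (f j)))"
      by (rule sum.cong) (auto simp: cS)
    also have "\<dots> = (\<Sum>i<?n. co' T i * (\<phi> i * \<phi> i))"
      by (rule sum.reindex_bij_betw[OF f])
    also have "\<dots> = sq' T \<phi>" using sq'_coord[OF T] p nT by simp
    finally show ?thesis .
  qed
  show ?thesis unfolding ssq_isometric_def using nT bij q q' by auto
qed



lemma sum_lt2: "(\<Sum>i<(2::nat). f i) = f 0 + (f 1 :: 'a::comm_monoid_add)"
  by (simp add: numeral_2_eq_2)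

lemma sum_lt3: "(\<Sum>i<(3::nat). f i) = f 0 + f 1 + (f 2 :: 'a::comm_monoid_add)"
  by (simp add: numeral_3_eq_3 numeral_2_eq_2 add.assoc)

lemma metab_line:
  fixes L :: "('a::field \<times> 'a) list"
  assumes w: "w \<in> vecs (length L)" and qw: "(\<Sum>i<length L. fst (L!i) * (w i * w i)) = 0"
  and d: "\<And>\<phi>. \<phi> \<in> vecs (length L) \<Longrightarrow> pairing (length L) \<phi> w = 0 \<Longrightarrow>
            (\<Sum>i<length L. snd (L!i) * (\<phi> i * \<phi> i)) = 0"
  shows "ssq_metabolic (dg L)"
proof -
  let ?n = "length L"
  define U where "U = range (\<lambda>t. \<lambda>i. t * w i)"
  have "is_subspace ?n U"
    unfolding is_subspace_def
  proof (intro conjI ballI allI)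
    show "U \<subseteq> vecs ?n" using w by (auto simp: U_def vecs_def)
    show "(\<lambda>i. 0) \<in> U" unfolding U_def by (rule range_eqI[where x=0]) simp
    fix x y assume "x \<in> U" "y \<in> U"
    then obtain s t where "x = (\<lambda>i. s * w i)" "y = (\<lambda>i. t * w i)" by (auto simp: U_def)
    then show "(\<lambda>i. x i + y i) \<in> U" unfolding U_def by (intro range_eqI[where x="s+t"]) (simp add: algebra_simps)
  next
    fix x c assume "x \<in> U"
    then obtain s where "x = (\<lambda>i. s * w i)" by (auto simp: U_def)
    then show "(\<lambda>i. c * x i) \<in> U" unfolding U_def by (intro range_eqI[where x="c*s"]) (simp add: algebra_simps)
  qed
  moreover have "\<forall>u\<in>U. sq (dg L) u = 0"
  proof
    fix u assume "u \<in> U"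
    then obtain t where u: "u = (\<lambda>i. t * w i)" by (auto simp: U_def)
    have "sq (dg L) u = t * t * (\<Sum>i<?n. fst (L!i) * (w i * w i))"
      by (simp add: dg_def u sum_distrib_left mult_ac)
    then show "sq (dg L) u = 0" using qw by simp
  qed
  moreover have "\<forall>\<phi>\<in>annihilator ?n U. sq' (dg L) \<phi> = 0"
  proof
    fix \<phi> :: "nat \<Rightarrow> 'a" assume p: "\<phi> \<in> annihilator ?n U"
    have "(\<lambda>i. 1 * w i) \<in> U" unfolding U_def by blast
    then have "pairing ?n \<phi> w = 0" using p by (auto simp: annihilator_def)
    moreover have "\<phi> \<in> vecs ?n" using p by (simp add: annihilator_def)
    ultimately show "sq' (dg L) \<phi> = 0" using d by (simp add: dg_def)
  qed
  ultimately show ?thesis unfolding ssq_metabolic_def by (auto simp: dg_def)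
qed

lemma metab_nil: "ssq_metabolic (dg ([] :: ('a::field \<times> 'a) list))"
  unfolding ssq_metabolic_def is_subspace_def
  by (rule exI[where x="{\<lambda>i. 0}"]) (simp add: dg_def vecs_def)

lemma metab_pair:
  assumes ch: "(2::'a::field) = 0"
  shows "ssq_metabolic (dg [(a::'a, c), (a, c)])"
proof (rule metab_line[where w="\<lambda>i. if i < 2 then 1 else 0"])
  show "(\<lambda>i. if i < 2 then 1 else 0) \<in> vecs (length [(a, c), (a, c)])" by (simp add: vecs_def)
  show "(\<Sum>i<length [(a, c), (a, c)]. fst ([(a, c), (a, c)] ! i) *
      ((if i < 2 then 1 else 0) * (if i < 2 then 1 else 0))) = 0"
    using ch2_add_self[OF ch, of a] by (simp add: sum_lt2)
  fix \<phi> :: "nat \<Rightarrow> 'a" assume "pairing (length [(a, c), (a, c)]) \<phi> (\<lambda>i. if i < 2 then 1 else 0) = 0"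
  then have "\<phi> 0 + \<phi> 1 = 0" by (simp add: pairing_def sum_lt2)
  then have "\<phi> 0 = \<phi> 1" by (rule ch2_eq[OF ch])
  then show "(\<Sum>i<length [(a, c), (a, c)]. snd ([(a, c), (a, c)] ! i) * (\<phi> i * \<phi> i)) = 0"
    using ch2_add_self[OF ch, of "c * (\<phi> 1 * \<phi> 1)"] by (simp add: sum_lt2)
qed

lemma metab_ladd:
  assumes ch: "(2::'a::field) = 0"
  shows "ssq_metabolic (dg [(a + b::'a, c), (a, c), (b, c)])"
proof (rule metab_line[where w="\<lambda>i. if i < 3 then 1 else 0"])
  show "(\<lambda>i. if i < 3 then 1 else 0) \<in> vecs (length [(a + b, c), (a, c), (b, c)])" by (simp add: vecs_def)
  show "(\<Sum>i<length [(a + b, c), (a, c), (b, c)]. fst ([(a + b, c), (a, c), (b, c)] ! i) *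
      ((if i < 3 then 1 else 0) * (if i < 3 then 1 else 0))) = 0"
    using ch2_add_self[OF ch, of "a+b"] by (simp add: sum_lt3 add.assoc)
  fix \<phi> :: "nat \<Rightarrow> 'a" assume "pairing (length [(a + b, c), (a, c), (b, c)]) \<phi> (\<lambda>i. if i < 3 then 1 else 0) = 0"
  then have z: "\<phi> 0 + \<phi> 1 + \<phi> 2 = 0" by (simp add: pairing_def sum_lt3 numeral_2_eq_2)
  have "(\<phi> 0 + \<phi> 1 + \<phi> 2) * (\<phi> 0 + \<phi> 1 + \<phi> 2) = \<phi> 0 * \<phi> 0 + \<phi> 1 * \<phi> 1 + \<phi> 2 * \<phi> 2"
    by (simp add: ch2_sq_add[OF ch])
  then have "\<phi> 0 * \<phi> 0 + \<phi> 1 * \<phi> 1 + \<phi> 2 * \<phi> 2 = 0" using z by simp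
  then have "c * (\<phi> 0 * \<phi> 0 + \<phi> 1 * \<phi> 1 + \<phi> 2 * \<phi> 2) = 0" by simp
  then show "(\<Sum>i<length [(a + b, c), (a, c), (b, c)]. snd ([(a + b, c), (a, c), (b, c)] ! i) * (\<phi> i * \<phi> i)) = 0"
    by (simp add: sum_lt3 distrib_left numeral_2_eq_2)
qed

lemma metab_bal:
  assumes ch: "(2::'a::field) = 0"
  shows "ssq_metabolic (dg [(s * s * a::'a, c), (a, s * s * c)])"
proof (rule metab_line[where w="\<lambda>i. if i = 0 then 1 else if i = 1 then s else 0"])
  show "(\<lambda>i. if i = 0 then 1 else if i = 1 then s else 0) \<in> vecs (length [(s * s * a, c), (a, s * s * c)])"
    by (simp add: vecs_def)
  show "(\<Sum>i<length [(s * s * a, c), (a, s * s * c)]. fst ([(s * s * a, c), (a, s * s * c)] ! i) *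
     ((if i = 0 then 1 else if i = 1 then s else 0) * (if i = 0 then 1 else if i = 1 then s else 0))) = 0"
    using ch2_add_self[OF ch, of "s*s*a"] by (simp add: sum_lt2 mult_ac)
  fix \<phi> :: "nat \<Rightarrow> 'a" assume "pairing (length [(s * s * a, c), (a, s * s * c)]) \<phi> (\<lambda>i. if i = 0 then 1 else if i = 1 then s else 0) = 0"
  then have "\<phi> 0 + \<phi> 1 * s = 0" by (simp add: pairing_def sum_lt2)
  then have e: "\<phi> 0 = \<phi> 1 * s" by (rule ch2_eq[OF ch])
  show "(\<Sum>i<length [(s * s * a, c), (a, s * s * c)]. snd ([(s * s * a, c), (a, s * s * c)] ! i) * (\<phi> i * \<phi> i)) = 0"
    using ch2_add_self[OF ch, of "s*s*c*(\<phi> 1 * \<phi> 1)"] by (simp add: sum_lt2 e mult_ac)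
qed

lemma metab_radd:
  assumes ch: "(2::'a::field) = 0"
  shows "ssq_metabolic (dg [(a::'a, c + d), (a, c), (a, d)])"
proof -
  let ?L = "[(a::'a, c + d), (a, c), (a, d)]"
  define U where "U = {x \<in> vecs 3. x 0 + x 1 + x 2 = (0::'a)}"
  have "is_subspace 3 U"
    unfolding is_subspace_def
  proof (intro conjI ballI allI)
    show "U \<subseteq> vecs 3" by (auto simp: U_def)
    show "(\<lambda>i. 0) \<in> U" by (simp add: U_def vecs_def)
    fix x y assume x: "x \<in> U" and y: "y \<in> U"
    have hx: "x 0 + x 1 + x 2 = 0" using x by (simp add: U_def)
    have hy: "y 0 + y 1 + y 2 = 0" using y by (simp add: U_def)
    have "(x 0 + y 0) + (x 1 + y 1) + (x 2 + y 2) = (x 0 + x 1 + x 2) + (y 0 + y 1 + y 2)"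
      by (simp add: algebra_simps)
    also have "\<dots> = 0" using hx hy by simp
    finally have e: "(x 0 + y 0) + (x 1 + y 1) + (x 2 + y 2) = 0" .
    have "\<forall>i\<ge>3. x i + y i = 0" using x y by (simp add: U_def vecs_def)
    then show "(\<lambda>i. x i + y i) \<in> U" using e unfolding U_def vecs_def by blast
  next
    fix x and c :: 'a assume x: "x \<in> U"
    have hx: "x 0 + x 1 + x 2 = 0" using x by (simp add: U_def)
    have "c * x 0 + c * x 1 + c * x 2 = c * (x 0 + x 1 + x 2)" by (simp add: algebra_simps)
    also have "\<dots> = 0" using hx by simp
    finally have e: "c * x 0 + c * x 1 + c * x 2 = 0" .
    have "\<forall>i\<ge>3. c * x i = 0" using x by (simp add: U_def vecs_def)
    then show "(\<lambda>i. c * x i) \<in> U" using e unfolding U_def vecs_def by blast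
  qed
  moreover have "\<forall>u\<in>U. sq (dg ?L) u = 0"
  proof
    fix u assume "u \<in> U"
    then have z: "u 0 + u 1 + u 2 = 0" by (simp add: U_def)
    have "(u 0 + u 1 + u 2) * (u 0 + u 1 + u 2) = u 0 * u 0 + u 1 * u 1 + u 2 * u 2"
      by (simp add: ch2_sq_add[OF ch])
    then have "u 0 * u 0 + u 1 * u 1 + u 2 * u 2 = 0" using z by simp
    then have "a * (u 0 * u 0 + u 1 * u 1 + u 2 * u 2) = 0" by simp
    then show "sq (dg ?L) u = 0" by (simp add: numeral_2_eq_2 dg_def sum_lt3 distrib_left)
  qed
  moreover have "\<forall>\<phi>\<in>annihilator 3 U. sq' (dg ?L) \<phi> = 0"
  proof
    fix \<phi> :: "nat \<Rightarrow> 'a" assume p: "\<phi> \<in> annihilator 3 U"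
    have u1: "(\<lambda>i. if i = 0 then 1 else if i = 1 then 1 else 0) \<in> U"
      using ch2_add_self[OF ch, of 1] by (simp add: U_def vecs_def)
    have u2: "(\<lambda>i. if i = 0 then 1 else if i = 2 then 1 else 0) \<in> U"
      using ch2_add_self[OF ch, of 1] by (simp add: U_def vecs_def)
    have "\<phi> 0 + \<phi> 1 = 0" using p u1 by (auto simp: annihilator_def pairing_def sum_lt3 dest!: bspec)
    then have e1: "\<phi> 0 = \<phi> 1" by (rule ch2_eq[OF ch])
    have "\<phi> 0 + \<phi> 2 = 0" using p u2 by (auto simp: annihilator_def pairing_def sum_lt3 dest!: bspec)
    then have e2: "\<phi> 0 = \<phi> 2" by (rule ch2_eq[OF ch])
    have "sq' (dg ?L) \<phi> = (c + d) * (\<phi> 0 * \<phi> 0) + c * (\<phi> 1 * \<phi> 1) + d * (\<phi> 2 * \<phi> 2)"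
      by (simp add: numeral_2_eq_2 dg_def sum_lt3)
    also have "\<dots> = (c + d) * (\<phi> 0 * \<phi> 0) + (c + d) * (\<phi> 0 * \<phi> 0)"
      by (simp only: e1[symmetric] e2[symmetric]) (simp add: algebra_simps)
    finally have "sq' (dg ?L) \<phi> = (c + d) * (\<phi> 0 * \<phi> 0) + (c + d) * (\<phi> 0 * \<phi> 0)" .
    then show "sq' (dg ?L) \<phi> = 0" using ch2_add_self[OF ch] by simp
  qed
  moreover have n3: "sdim (dg ?L) = 3" by (simp add: dg_def numeral_3_eq_3)
  ultimately show ?thesis unfolding ssq_metabolic_def n3 by blast
qed



lemma sum_split_add: "(\<Sum>i<(n1::nat)+n2. g i) = (\<Sum>i<n1. g i) + (\<Sum>i<n2. (g (n1 + i) :: 'a::comm_monoid_add))"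
  by (induction n2) (simp_all add: add.assoc)

lemma sum_dg_app:
  "(\<Sum>i<length (P1 @ P2). h ((P1 @ P2) ! i) (x i)) =
   (\<Sum>i<length P1. h (P1 ! i) (x i)) + (\<Sum>i<length P2. (h (P2 ! i) (x (length P1 + i)) :: 'a::comm_monoid_add))"
proof -
  have "(\<Sum>i<length P1 + length P2. h ((P1 @ P2) ! i) (x i)) =
        (\<Sum>i<length P1. h ((P1 @ P2) ! i) (x i)) + (\<Sum>i<length P2. h ((P1 @ P2) ! (length P1 + i)) (x (length P1 + i)))"
    by (rule sum_split_add)
  also have "(\<Sum>i<length P1. h ((P1 @ P2) ! i) (x i)) = (\<Sum>i<length P1. h (P1 ! i) (x i))"
    by (rule sum.cong) (auto simp: nth_append)
  finally show ?thesis by (simp add: nth_append)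
qed

lemma metab_append:
  fixes P1 P2 :: "('a::field \<times> 'a) list"
  assumes m1: "ssq_metabolic (dg P1)" and m2: "ssq_metabolic (dg P2)"
  shows "ssq_metabolic (dg (P1 @ P2))"
proof -
  let ?n1 = "length P1" and ?n2 = "length P2"
  obtain U1 where U1: "is_subspace ?n1 U1" and q1: "\<forall>u\<in>U1. sq (dg P1) u = 0"
    and a1: "\<forall>\<phi>\<in>annihilator ?n1 U1. sq' (dg P1) \<phi> = 0"
    using m1 unfolding ssq_metabolic_def by (auto simp: dg_def)
  obtain U2 where U2: "is_subspace ?n2 U2" and q2: "\<forall>u\<in>U2. sq (dg P2) u = 0"
    and a2: "\<forall>\<phi>\<in>annihilator ?n2 U2. sq' (dg P2) \<phi> = 0"
    using m2 unfolding ssq_metabolic_def by (auto simp: dg_def)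
  define jn where "jn = (\<lambda>(u1::nat \<Rightarrow> 'a) u2 i. if i < ?n1 then u1 i else u2 (i - ?n1))"
  define U where "U = {jn u1 u2 | u1 u2. u1 \<in> U1 \<and> u2 \<in> U2}"
  have z1: "(\<lambda>i. 0) \<in> U1" and z2: "(\<lambda>i. 0) \<in> U2" using U1 U2 by (auto simp: is_subspace_def)
  have v1: "U1 \<subseteq> vecs ?n1" and v2: "U2 \<subseteq> vecs ?n2" using U1 U2 by (auto simp: is_subspace_def)
  have ad1: "\<And>x y. x \<in> U1 \<Longrightarrow> y \<in> U1 \<Longrightarrow> (\<lambda>i. x i + y i) \<in> U1" using U1 unfolding is_subspace_def by blast
  have ad2: "\<And>x y. x \<in> U2 \<Longrightarrow> y \<in> U2 \<Longrightarrow> (\<lambda>i. x i + y i) \<in> U2" using U2 unfolding is_subspace_def by blast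
  have sc1: "\<And>x c. x \<in> U1 \<Longrightarrow> (\<lambda>i. c * x i) \<in> U1" using U1 unfolding is_subspace_def by blast
  have sc2: "\<And>x c. x \<in> U2 \<Longrightarrow> (\<lambda>i. c * x i) \<in> U2" using U2 unfolding is_subspace_def by blast
  have jU: "jn u1 u2 \<in> U" if "u1 \<in> U1" "u2 \<in> U2" for u1 u2 using that unfolding U_def by blast
  have "is_subspace (?n1 + ?n2) U"
    unfolding is_subspace_def
  proof (intro conjI ballI allI)
    show "U \<subseteq> vecs (?n1 + ?n2)"
    proof
      fix x assume "x \<in> U"
      then obtain u1 u2 where x: "x = jn u1 u2" and "u1 \<in> U1" "u2 \<in> U2" unfolding U_def by blast
      then have "u2 \<in> vecs ?n2" using v2 by blast
      then show "x \<in> vecs (?n1 + ?n2)" by (auto simp: x jn_def vecs_def)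
    qed
    have "(\<lambda>i. 0) = jn (\<lambda>i. 0) (\<lambda>i. 0)" by (simp add: jn_def fun_eq_iff)
    then show "(\<lambda>i. 0) \<in> U" using jU[OF z1 z2] by simp
  next
    fix x y assume "x \<in> U" "y \<in> U"
    then obtain u1 u2 w1 w2 where x: "x = jn u1 u2" and y: "y = jn w1 w2" and
      m: "u1 \<in> U1" "u2 \<in> U2" "w1 \<in> U1" "w2 \<in> U2" unfolding U_def by blast
    have "(\<lambda>i. x i + y i) = jn (\<lambda>i. u1 i + w1 i) (\<lambda>i. u2 i + w2 i)" by (simp add: x y jn_def fun_eq_iff)
    then show "(\<lambda>i. x i + y i) \<in> U" using jU[OF ad1[OF m(1,3)] ad2[OF m(2,4)]] by simp
  next
    fix x c assume "x \<in> U"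
    then obtain u1 u2 where x: "x = jn u1 u2" and m: "u1 \<in> U1" "u2 \<in> U2" unfolding U_def by blast
    have "(\<lambda>i. c * x i) = jn (\<lambda>i. c * u1 i) (\<lambda>i. c * u2 i)" by (simp add: x jn_def fun_eq_iff)
    then show "(\<lambda>i. c * x i) \<in> U" using jU[OF sc1[OF m(1)] sc2[OF m(2)]] by simp
  qed
  moreover have "\<forall>u\<in>U. sq (dg (P1 @ P2)) u = 0"
  proof
    fix x assume "x \<in> U"
    then obtain u1 u2 where x: "x = jn u1 u2" and m: "u1 \<in> U1" "u2 \<in> U2" unfolding U_def by blast
    have "sq (dg (P1 @ P2)) x = sq (dg P1) u1 + sq (dg P2) u2"
      unfolding dg_def by (simp add: sum_dg_app[where h="\<lambda>p y. fst p * (y * y)"] x jn_def del: length_append)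
    then show "sq (dg (P1 @ P2)) x = 0" using q1 q2 m by simp
  qed
  moreover have "\<forall>\<phi>\<in>annihilator (?n1 + ?n2) U. sq' (dg (P1 @ P2)) \<phi> = 0"
  proof
    fix \<phi> assume p: "\<phi> \<in> annihilator (?n1 + ?n2) U"
    define \<phi>1 where "\<phi>1 = (\<lambda>i. if i < ?n1 then \<phi> i else 0)"
    define \<phi>2 where "\<phi>2 = (\<lambda>i. if i < ?n2 then \<phi> (?n1 + i) else 0)"
    have "\<phi>1 \<in> annihilator ?n1 U1"
      unfolding annihilator_def
    proof (intro CollectI conjI ballI)
      show "\<phi>1 \<in> vecs ?n1" by (simp add: \<phi>1_def vecs_def)
      fix u assume u: "u \<in> U1"
      have "pairing (?n1 + ?n2) \<phi> (jn u (\<lambda>i. 0)) = 0" using p jU[OF u z2] by (auto simp: annihilator_def)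
      moreover have "pairing (?n1 + ?n2) \<phi> (jn u (\<lambda>i. 0)) = pairing ?n1 \<phi>1 u"
        unfolding pairing_def sum_split_add by (simp add: jn_def \<phi>1_def)
      ultimately show "pairing ?n1 \<phi>1 u = 0" by simp
    qed
    then have s1: "sq' (dg P1) \<phi>1 = 0" using a1 by blast
    have "\<phi>2 \<in> annihilator ?n2 U2"
      unfolding annihilator_def
    proof (intro CollectI conjI ballI)
      show "\<phi>2 \<in> vecs ?n2" by (simp add: \<phi>2_def vecs_def)
      fix u assume u: "u \<in> U2"
      have "pairing (?n1 + ?n2) \<phi> (jn (\<lambda>i. 0) u) = 0" using p jU[OF z1 u] by (auto simp: annihilator_def)
      moreover have "pairing (?n1 + ?n2) \<phi> (jn (\<lambda>i. 0) u) = pairing ?n2 \<phi>2 u"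
        unfolding pairing_def sum_split_add by (simp add: jn_def \<phi>2_def)
      ultimately show "pairing ?n2 \<phi>2 u = 0" by simp
    qed
    then have s2: "sq' (dg P2) \<phi>2 = 0" using a2 by blast
    have "sq' (dg (P1 @ P2)) \<phi> = sq' (dg P1) \<phi>1 + sq' (dg P2) \<phi>2"
      unfolding dg_def by (simp add: sum_dg_app[where h="\<lambda>p y. snd p * (y * y)"] \<phi>1_def \<phi>2_def del: length_append)
    then show "sq' (dg (P1 @ P2)) \<phi> = 0" using s1 s2 by simp
  qed
  moreover have "sdim (dg (P1 @ P2)) = ?n1 + ?n2" by (simp add: dg_def)
  ultimately show ?thesis unfolding ssq_metabolic_def by metis
qed

lemma rel_real:
  fixes r :: "'a::field \<times> 'a \<Rightarrow> int"
  assumes ch: "(2::'a) = 0"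
  shows "r \<in> tens_rel \<Longrightarrow> \<exists>P N. ssq_metabolic (dg P) \<and> ssq_metabolic (dg N) \<and>
     r = (\<lambda>p. cnt P p - cnt N p :: int)"
proof (induction rule: tens_rel.induct)
  case (ladd a b c)
  show ?case
    apply (rule exI[where x="[(a+b,c),(a,c),(b,c)]"], rule exI[where x="[(a,c),(a,c)] @ [(b,c),(b,c)]"])
    using metab_ladd[OF ch, of a b c] metab_append[OF metab_pair[OF ch, of a c] metab_pair[OF ch, of b c]]
    by (auto simp: cnt_def gen_def fun_eq_iff)
next
  case (radd a c d)
  show ?case
    apply (rule exI[where x="[(a,c+d),(a,c),(a,d)]"], rule exI[where x="[(a,c),(a,c)] @ [(a,d),(a,d)]"])
    using metab_radd[OF ch, of a c d] metab_append[OF metab_pair[OF ch, of a c] metab_pair[OF ch, of a d]]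
    by (auto simp: cnt_def gen_def fun_eq_iff)
next
  case (bal s a c)
  show ?case
    apply (rule exI[where x="[(s*s*a,c),(a,s*s*c)]"], rule exI[where x="[(a,s*s*c),(a,s*s*c)]"])
    using metab_bal[OF ch, of s a c] metab_pair[OF ch, of a "s*s*c"]
    by (auto simp: cnt_def gen_def fun_eq_iff)
next
  case zero
  show ?case using metab_nil by (auto simp: cnt_def fun_eq_iff)
next
  case (add f g)
  then obtain P1 N1 P2 N2 where "ssq_metabolic (dg P1)" "ssq_metabolic (dg N1)" "f = (\<lambda>p. cnt P1 p - cnt N1 p)"
    "ssq_metabolic (dg P2)" "ssq_metabolic (dg N2)" "g = (\<lambda>p. cnt P2 p - cnt N2 p)" by blast
  then show ?case
    by (intro exI[where x="P1 @ P2"] exI[where x="N1 @ N2"]) (auto simp: metab_append cnt_append fun_eq_iff)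
next
  case (neg f)
  then obtain P N where "ssq_metabolic (dg P)" "ssq_metabolic (dg N)" "f = (\<lambda>p. cnt P p - cnt N p)" by blast
  then show ?case by (intro exI[where x=N] exI[where x=P]) auto
qed

lemma witt_iff:
  fixes S T :: "'a::field ssq_space"
  assumes ch: "(2::'a) = 0" and S: "is_ssq S" and T: "is_ssq T"
  shows "witt_equiv S T \<longleftrightarrow> teq (tsum S) (tsum T)"
proof
  assume "witt_equiv S T"
  then obtain M M' where M: "is_ssq M" "ssq_metabolic M" and M': "is_ssq M'" "ssq_metabolic M'"
    and I: "ssq_isometric (ssq_orth S M) (ssq_orth T M')" unfolding witt_equiv_def by blast
  have "teq (tsum (ssq_orth S M)) (tsum (ssq_orth T M'))"
    by (rule iso_invariant[OF is_ssq_orth[OF S M(1)] is_ssq_orth[OF T M'(1)] I])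
  then have e: "teq (\<lambda>p. tsum S p + tsum M p) (\<lambda>p. tsum T p + tsum M' p)"
    by (simp add: tsum_orth S T M M')
  have "teq (\<lambda>p. tsum S p + 0) (\<lambda>p. tsum S p + tsum M p)"
    by (rule teq_add[OF teq_refl teq_sym[OF metabolic_teq0[OF ch M(1,2)]]])
  then have e1: "teq (tsum S) (\<lambda>p. tsum S p + tsum M p)" by simp
  have "teq (\<lambda>p. tsum T p + tsum M' p) (\<lambda>p. tsum T p + 0)"
    by (rule teq_add[OF teq_refl metabolic_teq0[OF ch M'(1,2)]])
  then have e2: "teq (\<lambda>p. tsum T p + tsum M' p) (tsum T)" by simp
  show "teq (tsum S) (tsum T)" by (rule teq_trans[OF teq_trans[OF e1 e] e2])
next
  assume "teq (tsum S) (tsum T)"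
  then have "(\<lambda>p. tsum S p - tsum T p) \<in> tens_rel" by (simp add: teq_def)
  then obtain P N where mP: "ssq_metabolic (dg P)" and mN: "ssq_metabolic (dg N)"
    and r: "(\<lambda>p. tsum S p - tsum T p) = (\<lambda>p. cnt P p - cnt N p)"
    using rel_real[OF ch] by blast
  have "mset (coefl (ssq_orth S (dg N))) = mset (coefl (ssq_orth T (dg P)))"
  proof (rule multiset_eqI)
    fix p
    have "tsum S p - tsum T p = cnt P p - cnt N p" using r by metis
    then have "int (count (mset (coefl S @ N)) p) = int (count (mset (coefl T @ P)) p)"
      by (simp add: tsum_def cnt_def)
    then show "count (mset (coefl (ssq_orth S (dg N)))) p = count (mset (coefl (ssq_orth T (dg P)))) p"
      by (simp add: coefl_orth[OF S is_ssq_dg[OF ch]] coefl_orth[OF T is_ssq_dg[OF ch]] coefl_dg)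
  qed
  then have "ssq_isometric (ssq_orth S (dg N)) (ssq_orth T (dg P))"
    by (rule perm_iso[OF is_ssq_orth[OF S is_ssq_dg[OF ch]] is_ssq_orth[OF T is_ssq_dg[OF ch]]])
  then show "witt_equiv S T" unfolding witt_equiv_def using is_ssq_dg[OF ch] mP mN by blast
qed



lemma fin_supp_add: "fin_supp f \<Longrightarrow> fin_supp g \<Longrightarrow> fin_supp (\<lambda>p. f p + g p)"
  unfolding fin_supp_def by (rule finite_subset[of _ "{p. f p \<noteq> 0} \<union> {p. g p \<noteq> 0}"]) auto

lemma fin_supp_diff: "fin_supp f \<Longrightarrow> fin_supp g \<Longrightarrow> fin_supp (\<lambda>p. f p - g p)"
  unfolding fin_supp_def by (rule finite_subset[of _ "{p. f p \<noteq> 0} \<union> {p. g p \<noteq> 0}"]) auto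

lemma fin_supp_cnt: "fin_supp (cnt L)"
  unfolding fin_supp_def cnt_def by (rule finite_subset[of _ "set L"]) (auto simp: count_eq_zero_iff)

lemma fin_supp_tsum: "fin_supp (tsum S)"
  by (simp add: tsum_def fin_supp_cnt)

lemma tclass_alt: "tclass f = {g. fin_supp g \<and> teq f g}"
  by (simp add: tclass_def teq_def)

lemma tclass_eq: "fin_supp f \<Longrightarrow> fin_supp g \<Longrightarrow> tclass f = tclass g \<longleftrightarrow> teq f g"
proof
  assume f: "fin_supp f" and g: "fin_supp g" and e: "tclass f = tclass g"
  have "g \<in> tclass g" using g teq_refl by (simp add: tclass_alt)
  then have "g \<in> tclass f" using e by simp
  then show "teq f g" by (simp add: tclass_alt)
next
  assume "teq f g"
  then show "tclass f = tclass g" unfolding tclass_alt by (metis teq_sym teq_trans)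
qed

lemma rel_mult: "r \<in> tens_rel \<Longrightarrow> (\<lambda>p. int m * r p) \<in> tens_rel"
proof (induction m)
  case 0 then show ?case using tens_rel.zero by simp
next
  case (Suc m)
  then have "(\<lambda>p. r p + int m * r p) \<in> tens_rel" by (intro tens_rel.add)
  then show ?case by (simp add: algebra_simps)
qed

lemma teq_scaled:
  assumes ch: "(2::'a::field) = 0"
  shows "teq (\<lambda>p. k * gen (fst (x::'a\<times>'a)) (snd x) p) (cnt (replicate (nat \<bar>k\<bar>) x))"
proof (cases "k \<ge> 0")
  case True
  then have "cnt (replicate (nat \<bar>k\<bar>) x) = (\<lambda>p. k * gen (fst x) (snd x) p)"
    by (auto simp: cnt_def gen_def fun_eq_iff)
  then show ?thesis by (simp add: teq_refl)
next
  case False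
  have e: "cnt (replicate (nat \<bar>k\<bar>) x) = (\<lambda>p. - k * gen (fst x) (snd x) p)"
    using False by (auto simp: cnt_def gen_def fun_eq_iff)
  obtain a c where x: "x = (a, c)" by fastforce
  have "(\<lambda>p. gen a c p + gen a c p) \<in> tens_rel"
    using gen_double[OF ch, of a c] by (simp add: teq_def)
  then have "(\<lambda>p. int (nat (- k)) * (gen a c p + gen a c p)) \<in> tens_rel" by (rule rel_mult)
  then have "(\<lambda>p. - (int (nat (- k)) * (gen a c p + gen a c p))) \<in> tens_rel" by (rule tens_rel.neg)
  moreover have "(\<lambda>p. - (int (nat (- k)) * (gen a c p + gen a c p))) = (\<lambda>p. k * gen (fst x) (snd x) p - - k * gen (fst x) (snd x) p)"
    using False by (auto simp: x fun_eq_iff algebra_simps)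
  ultimately show ?thesis by (simp add: teq_def e)
qed

lemma realize:
  assumes ch: "(2::'a::field) = 0"
  shows "finite A \<Longrightarrow> \<forall>f::'a\<times>'a\<Rightarrow>int. {p. f p \<noteq> 0} \<subseteq> A \<longrightarrow> (\<exists>L. teq f (cnt L))"
proof (induction A rule: finite_induct)
  case empty
  show ?case
  proof (intro allI impI)
    fix f :: "'a\<times>'a\<Rightarrow>int" assume "{p. f p \<noteq> 0} \<subseteq> {}"
    then have "f = cnt []" by (auto simp: cnt_def fun_eq_iff)
    then show "\<exists>L. teq f (cnt L)" using teq_refl by blast
  qed
next
  case (insert x A)
  show ?case
  proof (intro allI impI)
    fix f :: "'a\<times>'a\<Rightarrow>int" assume s: "{p. f p \<noteq> 0} \<subseteq> insert x A"
    define g where "g = (\<lambda>p. if p = x then 0 else f p)"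
    have "{p. g p \<noteq> 0} \<subseteq> A" using s by (auto simp: g_def)
    then obtain L where L: "teq g (cnt L)" using insert.IH by blast
    have f: "f = (\<lambda>p. g p + f x * gen (fst x) (snd x) p)" by (auto simp: g_def gen_def fun_eq_iff)
    have "teq (\<lambda>p. g p + f x * gen (fst x) (snd x) p) (\<lambda>p. cnt L p + cnt (replicate (nat \<bar>f x\<bar>) x) p)"
      by (rule teq_add[OF L teq_scaled[OF ch]])
    then have "teq f (cnt (L @ replicate (nat \<bar>f x\<bar>) x))" using f by (simp add: cnt_append)
    then show "\<exists>L. teq f (cnt L)" by blast
  qed
qed

lemma realize_fs:
  assumes ch: "(2::'a::field) = 0" and f: "fin_supp (f::'a\<times>'a\<Rightarrow>int)"
  obtains L where "teq f (cnt L)"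
  using realize[OF ch, of "{p. f p \<noteq> 0}"] f unfolding fin_supp_def by blast

lemma mult_tclass:
  assumes f: "fin_supp f" and g: "fin_supp g"
  shows "{(\<lambda>p. f' p + g' p) | f' g'. f' \<in> tclass f \<and> g' \<in> tclass g} = tclass (\<lambda>p. f p + g p)"
proof
  show "{(\<lambda>p. f' p + g' p) | f' g'. f' \<in> tclass f \<and> g' \<in> tclass g} \<subseteq> tclass (\<lambda>p. f p + g p)"
    unfolding tclass_alt by (auto intro: fin_supp_add teq_add)
next
  show "tclass (\<lambda>p. f p + g p) \<subseteq> {(\<lambda>p. f' p + g' p) | f' g'. f' \<in> tclass f \<and> g' \<in> tclass g}"
  proof
    fix h assume "h \<in> tclass (\<lambda>p. f p + g p)"
    then have h: "fin_supp h" "(\<lambda>p. f p + g p - h p) \<in> tens_rel" by (auto simp: tclass_def)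
    have "f \<in> tclass f" using f teq_refl by (simp add: tclass_alt)
    moreover have "(\<lambda>p. h p - f p) \<in> tclass g"
      using h fin_supp_diff[OF h(1) f] unfolding tclass_def by (simp add: algebra_simps)
    moreover have "h = (\<lambda>p. f p + (h p - f p))" by simp
    ultimately show "h \<in> {(\<lambda>p. f' p + g' p) | f' g'. f' \<in> tclass f \<and> g' \<in> tclass g}"
      by (intro CollectI exI[where x=f] exI[where x="\<lambda>p. h p - f p"]) simp
  qed
qed



theorem theorem2p2:
  assumes "CHAR('a::field) = 2"
  shows "\<exists>\<Phi>. \<Phi> \<in> iso (tensor_grp TYPE('a)) (Wssq TYPE('a)) \<and>
           (\<forall>a a' :: 'a. \<Phi> (pure_tensor a a') = witt_class (onedim a a'))"
proof -
  have ch: "(2::'a) = 0" using of_nat_CHAR[where 'a='a] assms by simp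
  define \<Phi> where "\<Phi> = (\<lambda>X::('a\<times>'a\<Rightarrow>int) set. {T. is_ssq T \<and> tclass (tsum T) = X})"
  have wc: "witt_class S = {T. is_ssq T \<and> teq (tsum S) (tsum T)}" if "is_ssq S" for S :: "'a ssq_space"
    using witt_iff[OF ch that] by (auto simp: witt_class_def)
  have Ptc: "\<Phi> (tclass f) = {T. is_ssq T \<and> teq f (tsum T)}" if f: "fin_supp f" for f :: "'a\<times>'a\<Rightarrow>int"
    unfolding \<Phi>_def using tclass_eq[OF fin_supp_tsum f] teq_sym by blast
  have Pwc: "\<Phi> (tclass f) = witt_class S" if f: "fin_supp f" and S: "is_ssq S" and e: "teq f (tsum S)" for f :: "'a\<times>'a\<Rightarrow>int" and S
    unfolding Ptc[OF f] wc[OF S] using e by (metis teq_sym teq_trans)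
  have Pex: "\<exists>S. is_ssq S \<and> teq f (tsum S)" if f: "fin_supp f" for f :: "'a\<times>'a\<Rightarrow>int"
  proof -
    obtain L where "teq f (cnt L)" using realize_fs[OF ch f] by blast
    then show ?thesis using is_ssq_dg[OF ch, of L] by (auto simp: tsum_dg)
  qed
  have cT: "carrier (tensor_grp TYPE('a)) = {tclass f | f. fin_supp f}" by (simp add: tensor_grp_def)
  have cW: "carrier (Wssq TYPE('a)) = {witt_class S | S. is_ssq S}" by (simp add: Wssq_def)
  have mT: "tclass f \<otimes>\<^bsub>tensor_grp TYPE('a)\<^esub> tclass g = tclass (\<lambda>p. f p + g p)"
    if "fin_supp f" "fin_supp g" for f g :: "'a\<times>'a\<Rightarrow>int"
    using mult_tclass[OF that] by (simp add: tensor_grp_def)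
  have mW: "X \<otimes>\<^bsub>Wssq TYPE('a)\<^esub> Y = \<Union>{witt_class (ssq_orth S T) | S T. S \<in> X \<and> T \<in> Y}" for X Y
    by (simp add: Wssq_def)
  have hom: "\<Phi> \<in> hom (tensor_grp TYPE('a)) (Wssq TYPE('a))"
    unfolding hom_def
  proof (intro CollectI conjI funcsetI ballI)
    fix X assume "X \<in> carrier (tensor_grp TYPE('a))"
    then obtain f where X: "X = tclass f" and f: "fin_supp f" using cT by auto
    obtain S where "is_ssq S" "teq f (tsum S)" using Pex[OF f] by blast
    then show "\<Phi> X \<in> carrier (Wssq TYPE('a))" using Pwc[OF f] X cW by auto
  next
    fix X Y assume "X \<in> carrier (tensor_grp TYPE('a))" "Y \<in> carrier (tensor_grp TYPE('a))"
    then obtain f g where X: "X = tclass f" and f: "fin_supp f" and Y: "Y = tclass g" and g: "fin_supp g"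
      using cT by auto
    have fg: "fin_supp (\<lambda>p. f p + g p)" by (rule fin_supp_add[OF f g])
    show "\<Phi> (X \<otimes>\<^bsub>tensor_grp TYPE('a)\<^esub> Y) = \<Phi> X \<otimes>\<^bsub>Wssq TYPE('a)\<^esub> \<Phi> Y"
    proof
      show "\<Phi> (X \<otimes>\<^bsub>tensor_grp TYPE('a)\<^esub> Y) \<subseteq> \<Phi> X \<otimes>\<^bsub>Wssq TYPE('a)\<^esub> \<Phi> Y"
      proof
        fix R assume "R \<in> \<Phi> (X \<otimes>\<^bsub>tensor_grp TYPE('a)\<^esub> Y)"
        then have R: "is_ssq R" "teq (\<lambda>p. f p + g p) (tsum R)" using X Y mT[OF f g] Ptc[OF fg] by auto
        obtain S where S: "is_ssq S" "teq f (tsum S)" using Pex[OF f] by blast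
        obtain T where T: "is_ssq T" "teq g (tsum T)" using Pex[OF g] by blast
        have "teq (tsum (ssq_orth S T)) (tsum R)"
          unfolding tsum_orth[OF S(1) T(1)]
          by (rule teq_trans[OF teq_add[OF teq_sym[OF S(2)] teq_sym[OF T(2)]] R(2)])
        then have "R \<in> witt_class (ssq_orth S T)" using R(1) wc[OF is_ssq_orth[OF S(1) T(1)]] by simp
        moreover have "S \<in> \<Phi> X" "T \<in> \<Phi> Y" using S T X Y Ptc[OF f] Ptc[OF g] by auto
        ultimately show "R \<in> \<Phi> X \<otimes>\<^bsub>Wssq TYPE('a)\<^esub> \<Phi> Y" unfolding mW by blast
      qed
    next
      show "\<Phi> X \<otimes>\<^bsub>Wssq TYPE('a)\<^esub> \<Phi> Y \<subseteq> \<Phi> (X \<otimes>\<^bsub>tensor_grp TYPE('a)\<^esub> Y)"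
      proof
        fix R assume "R \<in> \<Phi> X \<otimes>\<^bsub>Wssq TYPE('a)\<^esub> \<Phi> Y"
        then obtain S T where ST: "S \<in> \<Phi> X" "T \<in> \<Phi> Y" and R: "R \<in> witt_class (ssq_orth S T)"
          unfolding mW by blast
        have S: "is_ssq S" "teq f (tsum S)" using ST X Ptc[OF f] by auto
        have T: "is_ssq T" "teq g (tsum T)" using ST Y Ptc[OF g] by auto
        have R': "is_ssq R" "teq (tsum (ssq_orth S T)) (tsum R)"
          using R wc[OF is_ssq_orth[OF S(1) T(1)]] by auto
        have "teq (\<lambda>p. f p + g p) (tsum R)"
          using teq_trans[OF teq_add[OF S(2) T(2)] R'(2)[unfolded tsum_orth[OF S(1) T(1)]]] .
        then show "R \<in> \<Phi> (X \<otimes>\<^bsub>tensor_grp TYPE('a)\<^esub> Y)"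
          using R'(1) X Y mT[OF f g] Ptc[OF fg] by auto
      qed
    qed
  qed
  have inj: "inj_on \<Phi> (carrier (tensor_grp TYPE('a)))"
  proof (rule inj_onI)
    fix X Y assume "X \<in> carrier (tensor_grp TYPE('a))" "Y \<in> carrier (tensor_grp TYPE('a))" and e: "\<Phi> X = \<Phi> Y"
    then obtain f g where X: "X = tclass f" and f: "fin_supp f" and Y: "Y = tclass g" and g: "fin_supp g"
      using cT by auto
    obtain S where S: "is_ssq S" "teq f (tsum S)" using Pex[OF f] by blast
    then have "S \<in> \<Phi> Y" using e X Ptc[OF f] by auto
    then have "teq g (tsum S)" using Y Ptc[OF g] by auto
    then have "teq f g" using S(2) by (metis teq_sym teq_trans)
    then show "X = Y" using X Y tclass_eq[OF f g] by simp
  qed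
  have surj: "\<Phi> ` carrier (tensor_grp TYPE('a)) = carrier (Wssq TYPE('a))"
  proof
    show "\<Phi> ` carrier (tensor_grp TYPE('a)) \<subseteq> carrier (Wssq TYPE('a))"
      using hom unfolding hom_def by auto
    show "carrier (Wssq TYPE('a)) \<subseteq> \<Phi> ` carrier (tensor_grp TYPE('a))"
    proof
      fix W assume "W \<in> carrier (Wssq TYPE('a))"
      then obtain S where W: "W = witt_class S" and S: "is_ssq S" using cW by auto
      have "\<Phi> (tclass (tsum S)) = W" using Pwc[OF fin_supp_tsum S teq_refl] W by simp
      moreover have "tclass (tsum S) \<in> carrier (tensor_grp TYPE('a))" using cT fin_supp_tsum by blast
      ultimately show "W \<in> \<Phi> ` carrier (tensor_grp TYPE('a))" by blast
    qed
  qed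
  have iso: "\<Phi> \<in> iso (tensor_grp TYPE('a)) (Wssq TYPE('a))"
    unfolding iso_def using hom inj surj by (auto simp: bij_betw_def)
  have pt: "\<Phi> (pure_tensor a a') = witt_class (onedim a a')" for a a' :: 'a
  proof -
    have g: "gen a a' = tsum (onedim a a')" by (simp add: onedim_dg tsum_dg cnt_single)
    have fs: "fin_supp (gen a a')" by (simp add: g fin_supp_tsum)
    have oss: "is_ssq (onedim a a')" by (simp add: onedim_dg is_ssq_dg[OF ch])
    show ?thesis unfolding pure_tensor_def by (rule Pwc[OF fs oss]) (simp add: g teq_refl)
  qed
  show ?thesis using iso pt by blast
qed

end
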